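(* Let $L(x)\in\mathbb{F}_{p^r}[x]$ be an additive polynomial and $A(x)\in\mathbb{F}_{p^r}[x]$. The following are equivalent: (i) $A(L(x))$ is an Alltop polynomial; (ii) $L(A(x))$ is an Alltop polynomial; (iii) $A(x)$ is an Alltop polynomial and $L(x)$ is a permutation polynomial of $\mathbb{F}_{p^r}$.
   Context: For $f:\mathbb{F}_{p^r}\to\mathbb{F}_{p^r}$ and $a\in\mathbb{F}_{p^r}$, $\Delta_{f,a}(x)=f(x+a)-f(x)$. A function $f$ is planar if for every $a\in\mathbb{F}_{p^r}^*$ the map $x\mapsto\Delta_{f,a}(x)$ is a bijection. A polynomial $A$ is an Alltop polynomial (function) if $\Delta_{A,a}$ is planar for every $a\in\mathbb{F}_{p^r}^*$. A polynomial $L$ is additive if $L(x+y)=L(x)+L(y)$ for all $x,y\in\mathbb{F}_{p^r}$. A permutation polynomial is one inducing a bijection of $\mathbb{F}_{p^r}$. *)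

theory Defs
  imports "HOL-Computational_Algebra.Polynomial"
begin

text \<open>Functions on a finite field (any finite field is some F_{p^r}).\<close>

definition diff_op :: "('a::ring \<Rightarrow> 'a) \<Rightarrow> 'a \<Rightarrow> 'a \<Rightarrow> 'a" where
  "diff_op f a = (\<lambda>x. f (x + a) - f x)"

definition planar :: "('a::ring \<Rightarrow> 'a) \<Rightarrow> bool" where
  "planar f \<longleftrightarrow> (\<forall>a. a \<noteq> 0 \<longrightarrow> bij (diff_op f a))"

definition alltop :: "('a::ring \<Rightarrow> 'a) \<Rightarrow> bool" where
  "alltop A \<longleftrightarrow> (\<forall>a. a \<noteq> 0 \<longrightarrow> planar (diff_op A a))"

definition additive_poly :: "'a::comm_ring poly \<Rightarrow> bool" where
  "additive_poly L \<longleftrightarrow> (\<forall>x y. poly L (x + y) = poly L x + poly L y)"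

definition permutation_poly :: "'a::comm_ring poly \<Rightarrow> bool" where
  "permutation_poly L \<longleftrightarrow> bij (poly L)"

end

theory Submission
  imports Defs
begin

lemma add_minus:
  fixes l :: "'a::ab_group_add \<Rightarrow> 'a"
  assumes "\<forall>x y. l (x + y) = l x + l y"
  shows "l (u - v) = l u - l v" "l 0 = 0"
proof -
  have "l (u - v + v) = l (u - v) + l v" using assms by blast
  then show "l (u - v) = l u - l v" by (simp add: algebra_simps)
  have "l (0 + 0) = l 0 + l 0" using assms by blast
  then show "l 0 = 0" by simp
qed

lemma compR:
  fixes l :: "'a::ring \<Rightarrow> 'a"
  assumes "\<forall>x y. l (x + y) = l x + l y"
  shows "diff_op (diff_op (f \<circ> l) a) b = diff_op (diff_op f (l a)) (l b) \<circ> l"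
  using assms by (simp add: diff_op_def fun_eq_iff)

lemma compL:
  fixes l :: "'a::ring \<Rightarrow> 'a"
  assumes "\<forall>x y. l (x + y) = l x + l y"
  shows "diff_op (diff_op (l \<circ> f) a) b = l \<circ> diff_op (diff_op f a) b"
  using add_minus[OF assms] by (simp add: diff_op_def fun_eq_iff)

lemma alltop_iff: "alltop f \<longleftrightarrow> (\<forall>a b. a \<noteq> 0 \<longrightarrow> b \<noteq> 0 \<longrightarrow> bij (diff_op (diff_op f a) b))"
  unfolding alltop_def planar_def by blast

lemma bij_finite_inj: "bij (l :: 'a::finite \<Rightarrow> 'a) \<longleftrightarrow> inj l"
proof
  assume "inj l"
  moreover have "surj l" using finite_UNIV_inj_surj[OF finite_UNIV \<open>inj l\<close>] .
  ultimately show "bij l" by (rule bijI)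
qed (rule bij_is_inj)

theorem lemma4:
  fixes L A :: "'a::{finite, field} poly"
  assumes "additive_poly L"
  shows "(alltop (poly (pcompose A L)) \<longleftrightarrow> alltop (poly (pcompose L A)))
       \<and> (alltop (poly (pcompose L A)) \<longleftrightarrow> alltop (poly A) \<and> permutation_poly L)"
proof -
  define l where "l = poly L"
  define f where "f = poly A"
  have add: "\<forall>x y. l (x + y) = l x + l y" using assms by (simp add: additive_poly_def l_def)
  have l0: "l 0 = 0" using add_minus[OF add] by simp
  have AL: "poly (pcompose A L) = f \<circ> l" and LA: "poly (pcompose L A) = l \<circ> f"
    by (auto simp: f_def l_def poly_pcompose fun_eq_iff)
  have nb1: "\<not> alltop (f \<circ> l)" if "\<not> bij l"
  proof
    assume "alltop (f \<circ> l)"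
    then have "bij (diff_op (diff_op (f \<circ> l) 1) 1)" by (simp add: alltop_iff)
    then have "inj (diff_op (diff_op f (l 1)) (l 1) \<circ> l)" by (simp add: compR[OF add] bij_def)
    then have "inj l" by (rule inj_on_imageI2)
    with that show False by (simp add: bij_finite_inj)
  qed
  have nb2: "\<not> alltop (l \<circ> f)" if "\<not> bij l"
  proof
    assume "alltop (l \<circ> f)"
    then have "bij (diff_op (diff_op (l \<circ> f) 1) 1)" by (simp add: alltop_iff)
    then have "surj (l \<circ> diff_op (diff_op f 1) 1)" by (simp add: compL[OF add] bij_def)
    then have "\<forall>y. \<exists>x. y = l (diff_op (diff_op f 1) 1 x)" by (simp add: surj_def)
    then have "surj l" by (auto simp: surj_def)
    with that show False using finite_UNIV_surj_inj[of l] by (simp add: bij_def)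
  qed
  have b1: "alltop (f \<circ> l) \<longleftrightarrow> alltop f" if bl: "bij l"
  proof -
    have inj: "l a \<noteq> 0" if "a \<noteq> 0" for a 
    proof
      assume "l a = 0"
      then have "l a = l 0" using l0 by simp
      then have "a = 0" using injD[OF bij_is_inj[OF bl]] by blast
      with that show False by simp
    qed
    have "bij (g \<circ> l) \<longleftrightarrow> bij g" for g :: "'a \<Rightarrow> 'a"
    proof
      assume "bij (g \<circ> l)"
      moreover have "bij (inv l)" using bl by (rule bij_imp_bij_inv)
      ultimately have "bij ((g \<circ> l) \<circ> inv l)" by (rule bij_comp[rotated])
      moreover have "(g \<circ> l) \<circ> inv l = g" using bl by (simp add: fun_eq_iff bij_is_surj surj_f_inv_f)
      ultimately show "bij g" by simp
    next
      assume "bij g" then show "bij (g \<circ> l)" using bl by (rule bij_comp[rotated])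
    qed
    then have "alltop (f \<circ> l) \<longleftrightarrow> (\<forall>a b. a \<noteq> 0 \<longrightarrow> b \<noteq> 0 \<longrightarrow> bij (diff_op (diff_op f (l a)) (l b)))"
      by (simp add: alltop_iff compR[OF add])
    also have "\<dots> \<longleftrightarrow> alltop f"
    proof
      assume H: "\<forall>a b. a \<noteq> 0 \<longrightarrow> b \<noteq> 0 \<longrightarrow> bij (diff_op (diff_op f (l a)) (l b))"
      show "alltop f" unfolding alltop_iff
      proof (intro allI impI)
        fix c d :: 'a assume "c \<noteq> 0" "d \<noteq> 0"
        obtain a where a: "c = l a" using surjD[OF bij_is_surj[OF bl]] by blast
        obtain b where b: "d = l b" using surjD[OF bij_is_surj[OF bl]] by blast
        have "a \<noteq> 0" "b \<noteq> 0" using a b l0 \<open>c \<noteq> 0\<close> \<open>d \<noteq> 0\<close> by auto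
        then show "bij (diff_op (diff_op f c) d)" using H a b by blast
      qed
    qed (use inj in \<open>auto simp: alltop_iff\<close>)
    finally show ?thesis .
  qed
  have b2: "alltop (l \<circ> f) \<longleftrightarrow> alltop f" if bl: "bij l"
  proof -
    have "bij (l \<circ> g) \<longleftrightarrow> bij g" for g :: "'a \<Rightarrow> 'a"
    proof
      assume "bij (l \<circ> g)"
      moreover have "bij (inv l)" using bl by (rule bij_imp_bij_inv)
      ultimately have "bij (inv l \<circ> (l \<circ> g))" by (rule bij_comp)
      moreover have "inv l \<circ> (l \<circ> g) = g" using bl by (simp add: fun_eq_iff bij_is_inj)
      ultimately show "bij g" by simp
    next
      assume "bij g" then show "bij (l \<circ> g)" using bl by (rule bij_comp)
    qed
    then show ?thesis by (simp add: alltop_iff compL[OF add])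
  qed
  have H: "(alltop (f \<circ> l) \<longleftrightarrow> alltop (l \<circ> f)) \<and> (alltop (l \<circ> f) \<longleftrightarrow> alltop f \<and> bij l)"
  proof (cases "bij l")
    case True
    then show ?thesis by (simp only: b1[OF True] b2[OF True] True simp_thms)
  next
    case False
    then show ?thesis by (simp only: nb1[OF False] nb2[OF False] False simp_thms)
  qed
  show ?thesis unfolding AL LA permutation_poly_def
    by (simp only: f_def[symmetric] l_def[symmetric] H)
qed

end
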